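(* Let $b\in\Gamma^{*,\infty}_{A_p,\rho}(\mathbb R^{2d})$ be hypoelliptic, with hypoellipticity conditions (i) and (ii) holding with a constant $B$. Then for every $h>0$ there exists $C>0$ (resp. there exist $h,C>0$) such that $$|D^\alpha_w(b(w))^n|\le C2^nh^{|\alpha|}A_\alpha\langle w\rangle^{-\rho|\alpha|}|b(w)|^n$$ for all $\alpha\in\mathbb N^{2d}$, $n\in\mathbb N$, $w\in Q^c_B$. If the hypoellipticity conditions hold on all of $\mathbb R^{2d}$ (i.e. $B=0$), the estimate holds for all $w\in\mathbb R^{2d}$.
   Context: Notation: $\mathbb N=\{0,1,\dots\}$, $\langle x\rangle=(1+|x|^2)^{1/2}$, $D^\alpha=i^{-|\alpha|}\partial^\alpha$, $w=(x,\xi)\in\mathbb R^{2d}$. Sequences $M_p,A_p$ positive with $M_0=M_1=A_0=A_1=1$; (M.1) $N_p^2\le N_{p-1}N_{p+1}$; (M.2) $N_p\le c_0H^p\min_{q\le p}N_{p-q}N_q$; (M.3) $\sum_{p>q}N_{p-1}/N_p\le c_0qN_q/N_{q+1}$; (M.3)' $\sum N_{p-1}/N_p<\infty$; (M.4) $N_p^2/p!^2\le(N_{p-1}/(p-1)!)(N_{p+1}/(p+1)!)$. Standing: $M_p$ satisfies (M.1),(M.2),(M.3); $A_p$ satisfies (M.1),(M.2),(M.3)',(M.4); $A_p\le cL^pM_p$; $\rho$ with $\rho_0\le\rho\le1$ (strict if inf not attained), $\rho_0=\inf\{r>0:\exists c,L,\ A_p\le cL^pM_p^r\}$. $A_\alpha=A_{|\alpha|}$,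 $M(\lambda)=\sup_p\ln_+(\lambda^p/M_p)$. $*$: Beurling $(M_p)$ or Roumieu $\{M_p\}$; "(resp. ...)" refers to Roumieu. $\Gamma^{(M_p),\infty}_{A_p,\rho}(\mathbb R^{2d})=\varinjlim_{m\to\infty}\varprojlim_{h\to0}$, $\Gamma^{\{M_p\},\infty}_{A_p,\rho}(\mathbb R^{2d})=\varinjlim_{h\to\infty}\varprojlim_{m\to0}$ of Banach spaces of $a\in C^\infty(\mathbb R^{2d})$ with finite $\sup|D^\alpha_\xi D^\beta_xa|\langle w\rangle^{\rho(|\alpha|+|\beta|)}e^{-M(m|\xi|)-M(m|x|)}/(h^{|\alpha|+|\beta|}A_\alpha A_\beta)$. $Q_t=\{(x,\xi):\langle x\rangle<t,\langle\xi\rangle<t\}$. Hypoellipticity with constant $B$: (i) there are $c,m>0$ (resp. for every $m>0$ there is $c>0$) with $|b(x,\xi)|\ge ce^{-M(m|x|)-M(m|\xi|)}$ on $Q^c_B$; (ii) for every $h>0$ there is $C$ (resp. there are $h,C$) with $|D^\alpha_\xi D^\beta_xb|\le Ch^{|\alpha|+|\beta|}|b|A_\alpha A_\beta\langle w\rangle^{-\rho(|\alpha|+|\beta|)}$ on $Q^c_B$. *)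

theory Defs
  imports "HOL-Analysis.Analysis"
begin

text \<open>Beurling (M_p) versus Roumieu {M_p} setting.\<close>
datatype ultra = Beurling | Roumieu

definition cond_M1 :: "(nat \<Rightarrow> real) \<Rightarrow> bool" where
  "cond_M1 N \<longleftrightarrow> (\<forall>p\<ge>1. N p ^ 2 \<le> N (p - 1) * N (p + 1))"

definition cond_M2 :: "(nat \<Rightarrow> real) \<Rightarrow> bool" where
  "cond_M2 N \<longleftrightarrow> (\<exists>c0 H. \<forall>p. \<forall>q\<le>p. N p \<le> c0 * H ^ p * (N (p - q) * N q))"

text \<open>(M.3): for q >= 1, sum over p > q of N_(p-1)/N_p (p = k+q+1).\<close>
definition cond_M3 :: "(nat \<Rightarrow> real) \<Rightarrow> bool" where
  "cond_M3 N \<longleftrightarrow> (\<exists>c0. \<forall>q\<ge>1.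
      summable (\<lambda>k. N (k + q) / N (k + q + 1)) \<and>
      (\<Sum>k. N (k + q) / N (k + q + 1)) \<le> c0 * real q * N q / N (q + 1))"

text \<open>(M.3)': sum over p >= 1 of N_(p-1)/N_p converges.\<close>
definition cond_M3' :: "(nat \<Rightarrow> real) \<Rightarrow> bool" where
  "cond_M3' N \<longleftrightarrow> summable (\<lambda>k. N k / N (k + 1))"

definition cond_M4 :: "(nat \<Rightarrow> real) \<Rightarrow> bool" where
  "cond_M4 N \<longleftrightarrow> (\<forall>p\<ge>1. (N p / fact p) ^ 2 \<le>
      (N (p - 1) / fact (p - 1)) * (N (p + 1) / fact (p + 1)))"

definition assoc_fun :: "(nat \<Rightarrow> real) \<Rightarrow> real \<Rightarrow> real" where
  "assoc_fun N lam = (SUP p. max 0 (ln (lam ^ p / N p)))"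

definition rho_set :: "(nat \<Rightarrow> real) \<Rightarrow> (nat \<Rightarrow> real) \<Rightarrow> real set" where
  "rho_set M A = {r. r > 0 \<and> (\<exists>c L. \<forall>p. A p \<le> c * L ^ p * M p powr r)}"

definition rho0 :: "(nat \<Rightarrow> real) \<Rightarrow> (nat \<Rightarrow> real) \<Rightarrow> real" where
  "rho0 M A = Inf (rho_set M A)"

definition standing :: "(nat \<Rightarrow> real) \<Rightarrow> (nat \<Rightarrow> real) \<Rightarrow> real \<Rightarrow> bool" where
  "standing M A \<rho> \<longleftrightarrow>
     (\<forall>p. M p > 0) \<and> M 0 = 1 \<and> M 1 = 1 \<and>
     (\<forall>p. A p > 0) \<and> A 0 = 1 \<and> A 1 = 1 \<and>
     cond_M1 M \<and> cond_M2 M \<and> cond_M3 M \<and>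
     cond_M1 A \<and> cond_M2 A \<and> cond_M3' A \<and> cond_M4 A \<and>
     (\<exists>c L. \<forall>p. A p \<le> c * L ^ p * M p) \<and>
     rho0 M A \<le> \<rho> \<and> \<rho> \<le> 1 \<and>
     (rho0 M A \<notin> rho_set M A \<longrightarrow> rho0 M A < \<rho>)"

section \<open>Phase space R^{2d} = R^d x R^d, w = (x, xi)\<close>

definition jb :: "'a::real_normed_vector \<Rightarrow> real" where
  "jb v = sqrt (1 + norm v ^ 2)"

definition dirvec :: "('d::finite + 'd) \<Rightarrow> (real^'d) \<times> (real^'d)" where
  "dirvec j = (case j of Inl i \<Rightarrow> (axis i 1, 0) | Inr i \<Rightarrow> (0, axis i 1))"

definition pd :: "('d::finite + 'd) \<Rightarrow> ((real^'d) \<times> (real^'d) \<Rightarrow> complex)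
                  \<Rightarrow> (real^'d) \<times> (real^'d) \<Rightarrow> complex" where
  "pd j f w = vector_derivative (\<lambda>t. f (w + t *\<^sub>R dirvec j)) (at 0)"

fun dlist :: "('d::finite + 'd) list \<Rightarrow> ((real^'d) \<times> (real^'d) \<Rightarrow> complex)
               \<Rightarrow> (real^'d) \<times> (real^'d) \<Rightarrow> complex" where
  "dlist [] f = f"
| "dlist (j # js) f = pd j (dlist js f)"

definition smooth :: "((real^'d::finite) \<times> (real^'d) \<Rightarrow> complex) \<Rightarrow> bool" where
  "smooth f \<longleftrightarrow> (\<forall>js :: ('d + 'd) list. dlist js f differentiable_on UNIV)"

definition mabs :: "('i::finite \<Rightarrow> nat) \<Rightarrow> nat" where
  "mabs \<gamma> = (\<Sum>i\<in>UNIV. \<gamma> i)"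

definition dirs :: "('i::finite \<Rightarrow> nat) \<Rightarrow> 'i list" where
  "dirs \<gamma> = (SOME js. \<forall>i. count (mset js) i = \<gamma> i)"

definition Dm :: "(('d::finite + 'd) \<Rightarrow> nat) \<Rightarrow> ((real^'d) \<times> (real^'d) \<Rightarrow> complex)
                  \<Rightarrow> (real^'d) \<times> (real^'d) \<Rightarrow> complex" where
  "Dm \<gamma> f w = inverse (\<i> ^ mabs \<gamma>) * dlist (dirs \<gamma>) f w"

text \<open>D^alpha_xi D^beta_x corresponds to the multi-index case_sum beta alpha.\<close>

definition Gamma_bound :: "(nat \<Rightarrow> real) \<Rightarrow> (nat \<Rightarrow> real) \<Rightarrow> real \<Rightarrow> real \<Rightarrow> real
                           \<Rightarrow> ((real^'d::finite) \<times> (real^'d) \<Rightarrow> complex) \<Rightarrow> bool" where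
  "Gamma_bound M A \<rho> m h a \<longleftrightarrow> (\<exists>C. \<forall>(\<alpha>::'d \<Rightarrow> nat) (\<beta>::'d \<Rightarrow> nat) w.
      norm (Dm (case_sum \<beta> \<alpha>) a w) \<le>
        C * h ^ (mabs \<alpha> + mabs \<beta>) * A (mabs \<alpha>) * A (mabs \<beta>)
          * jb w powr (- \<rho> * real (mabs \<alpha> + mabs \<beta>))
          * exp (assoc_fun M (m * norm (snd w)) + assoc_fun M (m * norm (fst w))))"

definition Gamma_space :: "ultra \<Rightarrow> (nat \<Rightarrow> real) \<Rightarrow> (nat \<Rightarrow> real) \<Rightarrow> real
                           \<Rightarrow> ((real^'d::finite) \<times> (real^'d) \<Rightarrow> complex) \<Rightarrow> bool" where
  "Gamma_space u M A \<rho> a \<longleftrightarrow> smooth a \<and>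
     (case u of
        Beurling \<Rightarrow> (\<exists>m>0. \<forall>h>0. Gamma_bound M A \<rho> m h a)
      | Roumieu \<Rightarrow> (\<exists>h>0. \<forall>m>0. Gamma_bound M A \<rho> m h a))"

definition Qset :: "real \<Rightarrow> ((real^'d::finite) \<times> (real^'d)) set" where
  "Qset t = {w. jb (fst w) < t \<and> jb (snd w) < t}"

definition hypo_i :: "ultra \<Rightarrow> (nat \<Rightarrow> real) \<Rightarrow> real
                      \<Rightarrow> ((real^'d::finite) \<times> (real^'d) \<Rightarrow> complex) \<Rightarrow> bool" where
  "hypo_i u M B b \<longleftrightarrow>
     (let est = (\<lambda>c m. \<forall>w. w \<notin> Qset B \<longrightarrow>
                 norm (b w) \<ge> c * exp (- assoc_fun M (m * norm (fst w)) - assoc_fun M (m * norm (snd w))))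
      in case u of
           Beurling \<Rightarrow> (\<exists>c>0. \<exists>m>0. est c m)
         | Roumieu \<Rightarrow> (\<forall>m>0. \<exists>c>0. est c m))"

definition hypo_ii :: "ultra \<Rightarrow> (nat \<Rightarrow> real) \<Rightarrow> real \<Rightarrow> real
                      \<Rightarrow> ((real^'d::finite) \<times> (real^'d) \<Rightarrow> complex) \<Rightarrow> bool" where
  "hypo_ii u A \<rho> B b \<longleftrightarrow>
     (let est = (\<lambda>h C. \<forall>(\<alpha>::'d \<Rightarrow> nat) (\<beta>::'d \<Rightarrow> nat) w. w \<notin> Qset B \<longrightarrow>
                 norm (Dm (case_sum \<beta> \<alpha>) b w) \<le>
                   C * h ^ (mabs \<alpha> + mabs \<beta>) * norm (b w) * A (mabs \<alpha>) * A (mabs \<beta>)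
                     * jb w powr (- \<rho> * real (mabs \<alpha> + mabs \<beta>)))
      in case u of
           Beurling \<Rightarrow> (\<forall>h>0. \<exists>C. est h C)
         | Roumieu \<Rightarrow> (\<exists>h>0. \<exists>C. est h C))"

definition hypoelliptic :: "ultra \<Rightarrow> (nat \<Rightarrow> real) \<Rightarrow> (nat \<Rightarrow> real) \<Rightarrow> real \<Rightarrow> real
                      \<Rightarrow> ((real^'d::finite) \<times> (real^'d) \<Rightarrow> complex) \<Rightarrow> bool" where
  "hypoelliptic u M A \<rho> B b \<longleftrightarrow> hypo_i u M B b \<and> hypo_ii u A \<rho> B b"

end

theory Submission imports Defs begin

definition Dd :: "'a::real_normed_vector \<Rightarrow> ('a \<Rightarrow> 'b::real_normed_vector) \<Rightarrow> 'a \<Rightarrow> 'b" where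
  "Dd d g x = vector_derivative (\<lambda>t. g (x + t *\<^sub>R d)) (at 0)"

lemma pd_Dd: "pd j g = Dd (dirvec j) g"
  by (auto simp: pd_def Dd_def fun_eq_iff)

lemma line_hasderiv:
  assumes "g differentiable at (x + r *\<^sub>R d)"
  shows "((\<lambda>s. g (x + s *\<^sub>R d)) has_vector_derivative frechet_derivative g (at (x + r *\<^sub>R d)) d) (at r)"
proof -
  let ?y = "x + r *\<^sub>R d"
  let ?g' = "frechet_derivative g (at ?y)"
  have g: "(g has_derivative ?g') (at ?y)" using assms frechet_derivative_works by blast
  have l: "((\<lambda>s. x + s *\<^sub>R d) has_derivative (\<lambda>h. h *\<^sub>R d)) (at r)"
    by (auto intro!: derivative_eq_intros)
  have c: "((\<lambda>s. g (x + s *\<^sub>R d)) has_derivative (\<lambda>h. ?g' (h *\<^sub>R d))) (at r)"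
    using has_derivative_compose[OF l g] by simp
  have bl: "linear ?g'" using has_derivative_linear[OF g] .
  have "(\<lambda>h. ?g' (h *\<^sub>R d)) = (\<lambda>h. h *\<^sub>R ?g' d)"
    using bl by (simp add: linear_scale)
  with c show ?thesis by (simp add: has_vector_derivative_def)
qed

lemma Dd_frechet:
  assumes "g differentiable at y"
  shows "Dd d g y = frechet_derivative g (at y) d"
  using line_hasderiv[of g y 0 d] assms unfolding Dd_def
  by (simp add: vector_derivative_at)

lemma line_hasderiv_Dd:
  assumes "g differentiable at (x + r *\<^sub>R d)"
  shows "((\<lambda>s. g (x + s *\<^sub>R d)) has_vector_derivative Dd d g (x + r *\<^sub>R d)) (at r)"
  using line_hasderiv[OF assms] Dd_frechet[OF assms] by simp

lemma mvt_line:
  fixes g :: "real \<Rightarrow> 'b::real_normed_vector"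
  assumes "\<And>r. r \<in> closed_segment 0 t \<Longrightarrow> (g has_vector_derivative g' r) (at r)"
    and "\<And>r. r \<in> closed_segment 0 t \<Longrightarrow> norm (g' r) \<le> B"
  shows "norm (g t - g 0) \<le> B * \<bar>t\<bar>"
proof -
  have "norm (g t - g 0) \<le> B * norm (t - 0)"
  proof (rule differentiable_bound[where S="closed_segment 0 t" and f'="\<lambda>r h. h *\<^sub>R g' r"])
    show "convex (closed_segment 0 t)" by simp
    fix x assume x: "x \<in> closed_segment 0 t"
    show "(g has_derivative (\<lambda>h. h *\<^sub>R g' x)) (at x within closed_segment 0 t)"
      using assms(1)[OF x] by (auto simp: has_vector_derivative_def intro: has_derivative_at_withinI)
    have "onorm (\<lambda>h::real. h *\<^sub>R g' x) = onorm (\<lambda>h::real. h) * norm (g' x)"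
      by (rule onorm_scaleR_left) (rule bounded_linear_ident)
    then show "onorm (\<lambda>h::real. h *\<^sub>R g' x) \<le> B" using assms(2)[OF x] by (simp add: onorm_id)
  qed auto
  then show ?thesis by simp
qed

lemma seg_abs: "(r::real) \<in> closed_segment 0 t \<Longrightarrow> \<bar>r\<bar> \<le> \<bar>t\<bar>"
  by (auto simp: closed_segment_eq_real_ivl split: if_splits)

lemma schwarz_lim:
  fixes f :: "'a::real_normed_vector \<Rightarrow> 'b::real_normed_vector"
  assumes df: "\<And>x. f differentiable at x"
    and dQ: "\<And>x. Dd u f differentiable at x"
    and cR: "continuous (at w) (Dd v (Dd u f))"
  shows "((\<lambda>t. (1/t^2) *\<^sub>R (f (w + t *\<^sub>R u + t *\<^sub>R v) - f (w + t *\<^sub>R u) - f (w + t *\<^sub>R v) + f w))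
          \<longlongrightarrow> Dd v (Dd u f) w) (at 0)"
proof -
  define Q where "Q = Dd u f"
  define R where "R = Dd v Q"
  define c where "c = R w"
  have "\<exists>s>0. \<forall>t. t \<noteq> 0 \<and> norm (t - 0) < s \<longrightarrow>
     norm ((1/t^2) *\<^sub>R (f (w + t *\<^sub>R u + t *\<^sub>R v) - f (w + t *\<^sub>R u) - f (w + t *\<^sub>R v) + f w) - c) < e"
    if e: "e > 0" for e
  proof -
    have "R \<midarrow>w\<rightarrow> R w" using cR unfolding R_def Q_def continuous_at .
    then obtain \<delta> where d: "\<delta> > 0" and dR: "\<And>x. x \<noteq> w \<and> norm (x - w) < \<delta> \<Longrightarrow> norm (R x - c) < e/2"
      unfolding LIM_eq c_def using e by (meson half_gt_zero)
    have dR': "norm (R x - c) \<le> e/2" if "norm (x - w) < \<delta>" for x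
      using dR[of x] that e by (cases "x = w") (auto simp: c_def)
    define s0 where "s0 = \<delta> / (norm u + norm v + 1)"
    have nz: "norm u + norm v + 1 > 0" by (smt (verit) norm_ge_zero)
    have s0: "s0 > 0" using d nz by (simp add: s0_def)
    show ?thesis
    proof (intro exI[of _ s0] conjI allI impI s0)
      fix t :: real assume t: "t \<noteq> 0 \<and> norm (t - 0) < s0"
      have small: "norm (p *\<^sub>R u + q *\<^sub>R v) < \<delta>" if "\<bar>p\<bar> \<le> \<bar>t\<bar>" "\<bar>q\<bar> \<le> \<bar>t\<bar>" for p q
      proof -
        have "norm (p *\<^sub>R u + q *\<^sub>R v) \<le> \<bar>p\<bar> * norm u + \<bar>q\<bar> * norm v"
          by (metis norm_scaleR norm_triangle_le order_refl add_mono)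
        also have "\<dots> \<le> \<bar>t\<bar> * norm u + \<bar>t\<bar> * norm v"
          using that by (intro add_mono mult_right_mono) auto
        also have "\<dots> < s0 * (norm u + norm v + 1)"
        proof -
          have "\<bar>t\<bar> * norm u + \<bar>t\<bar> * norm v \<le> \<bar>t\<bar> * (norm u + norm v + 1) - \<bar>t\<bar>" by (simp add: algebra_simps)
          also have "\<dots> < \<bar>t\<bar> * (norm u + norm v + 1)" using t by simp
          also have "\<dots> \<le> s0 * (norm u + norm v + 1)"
            using t by (intro mult_right_mono) (auto intro: add_nonneg_nonneg)
          finally show ?thesis .
        qed
        also have "\<dots> = \<delta>" unfolding s0_def using nz by simp
        finally show ?thesis .
      qed
      have step1: "norm (Q (w + s *\<^sub>R u + t *\<^sub>R v) - Q (w + s *\<^sub>R u) - t *\<^sub>R c) \<le> e/2 * \<bar>t\<bar>"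
        if s: "s \<in> closed_segment 0 t" for s
      proof -
        have "norm ((\<lambda>r. Q ((w + s *\<^sub>R u) + r *\<^sub>R v) - r *\<^sub>R c) t - (\<lambda>r. Q ((w + s *\<^sub>R u) + r *\<^sub>R v) - r *\<^sub>R c) 0) \<le> e/2 * \<bar>t\<bar>"
        proof (rule mvt_line[where g'="\<lambda>r. R ((w + s *\<^sub>R u) + r *\<^sub>R v) - c"])
          fix r assume r: "r \<in> closed_segment 0 t"
          show "((\<lambda>r. Q (w + s *\<^sub>R u + r *\<^sub>R v) - r *\<^sub>R c) has_vector_derivative R (w + s *\<^sub>R u + r *\<^sub>R v) - c) (at r)"
            unfolding R_def
            by (intro has_vector_derivative_diff line_hasderiv_Dd)
               (auto simp: Q_def dQ intro!: derivative_eq_intros)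
          have "norm (w + s *\<^sub>R u + r *\<^sub>R v - w) < \<delta>"
            using small[of s r] seg_abs[OF s] seg_abs[OF r] by (simp add: add.assoc)
          then show "norm (R (w + s *\<^sub>R u + r *\<^sub>R v) - c) \<le> e/2" by (rule dR')
        qed
        then show ?thesis by (simp add: algebra_simps)
      qed
      have "norm ((\<lambda>s. f ((w + t *\<^sub>R v) + s *\<^sub>R u) - f (w + s *\<^sub>R u) - s *\<^sub>R (t *\<^sub>R c)) t
                 - (\<lambda>s. f ((w + t *\<^sub>R v) + s *\<^sub>R u) - f (w + s *\<^sub>R u) - s *\<^sub>R (t *\<^sub>R c)) 0) \<le> (e/2 * \<bar>t\<bar>) * \<bar>t\<bar>"
      proof (rule mvt_line[where g'="\<lambda>s. Q ((w + t *\<^sub>R v) + s *\<^sub>R u) - Q (w + s *\<^sub>R u) - t *\<^sub>R c"])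
        fix s assume s: "s \<in> closed_segment 0 t"
        show "((\<lambda>s. f (w + t *\<^sub>R v + s *\<^sub>R u) - f (w + s *\<^sub>R u) - s *\<^sub>R t *\<^sub>R c) has_vector_derivative
            Q (w + t *\<^sub>R v + s *\<^sub>R u) - Q (w + s *\<^sub>R u) - t *\<^sub>R c) (at s)"
          unfolding Q_def
          by (intro has_vector_derivative_diff line_hasderiv_Dd)
             (auto simp: df intro!: derivative_eq_intros)
        have "w + t *\<^sub>R v + s *\<^sub>R u = w + s *\<^sub>R u + t *\<^sub>R v" by (simp add: algebra_simps)
        then show "norm (Q (w + t *\<^sub>R v + s *\<^sub>R u) - Q (w + s *\<^sub>R u) - t *\<^sub>R c) \<le> e/2 * \<bar>t\<bar>"
          using step1[OF s] by metis
      qed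
      then have key: "norm ((f (w + t *\<^sub>R u + t *\<^sub>R v) - f (w + t *\<^sub>R u) - f (w + t *\<^sub>R v) + f w) - (t^2) *\<^sub>R c)
           \<le> e/2 * t^2"
        by (simp add: algebra_simps power2_eq_square)
      have tp: "t^2 > 0" using t by simp
      have "norm ((1/t^2) *\<^sub>R (f (w + t *\<^sub>R u + t *\<^sub>R v) - f (w + t *\<^sub>R u) - f (w + t *\<^sub>R v) + f w) - c)
          = (1/t^2) * norm ((f (w + t *\<^sub>R u + t *\<^sub>R v) - f (w + t *\<^sub>R u) - f (w + t *\<^sub>R v) + f w) - (t^2) *\<^sub>R c)"
      proof -
        have "(1/t^2) *\<^sub>R (f (w + t *\<^sub>R u + t *\<^sub>R v) - f (w + t *\<^sub>R u) - f (w + t *\<^sub>R v) + f w) - c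
           = (1/t^2) *\<^sub>R ((f (w + t *\<^sub>R u + t *\<^sub>R v) - f (w + t *\<^sub>R u) - f (w + t *\<^sub>R v) + f w) - (t^2) *\<^sub>R c)"
          using tp by (simp add: scaleR_diff_right)
        then show ?thesis using tp by simp
      qed
      also have "\<dots> \<le> (1/t^2) * (e/2 * t^2)" using key tp by (intro mult_left_mono) auto
      also have "\<dots> = e/2" using tp by simp
      also have "\<dots> < e" using e by simp
      finally show "norm ((1/t^2) *\<^sub>R (f (w + t *\<^sub>R u + t *\<^sub>R v) - f (w + t *\<^sub>R u) - f (w + t *\<^sub>R v) + f w) - c) < e" .
    qed
  qed
  then show ?thesis unfolding LIM_eq c_def R_def Q_def by blast
qed

lemma dlist_append: "dlist (xs @ ys) f = dlist xs (dlist ys f)"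
  by (induction xs) auto

lemma smooth_dlist: "smooth f \<Longrightarrow> smooth (dlist xs f)"
  unfolding smooth_def by (metis dlist_append)

lemma smooth_diff: "smooth f \<Longrightarrow> dlist js f differentiable at x"
  unfolding smooth_def by (meson UNIV_I differentiable_on_def)

lemma smooth_diff0: "smooth f \<Longrightarrow> f differentiable at x"
  using smooth_diff[of f "[]"] by simp

lemma smooth_pd: "smooth f \<Longrightarrow> smooth (pd j f)"
  using smooth_dlist[of f "[j]"] by simp

lemma schwarz:
  fixes f :: "(real^'d::finite) \<times> (real^'d) \<Rightarrow> complex"
  assumes "smooth f"
  shows "pd i (pd j f) = pd j (pd i f)"
proof
  fix w
  let ?u = "dirvec i" and ?v = "dirvec j"
  have d0: "\<And>x. f differentiable at x" using smooth_diff0[OF assms] .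
  have du: "\<And>x. Dd ?u f differentiable at x" using smooth_diff[OF assms, of "[i]"] by (simp add: pd_Dd)
  have dv: "\<And>x. Dd ?v f differentiable at x" using smooth_diff[OF assms, of "[j]"] by (simp add: pd_Dd)
  have c1: "continuous (at w) (Dd ?v (Dd ?u f))"
    using smooth_diff[OF assms, of "[j,i]" w] by (simp add: pd_Dd differentiable_imp_continuous_within)
  have c2: "continuous (at w) (Dd ?u (Dd ?v f))"
    using smooth_diff[OF assms, of "[i,j]" w] by (simp add: pd_Dd differentiable_imp_continuous_within)
  note l1 = schwarz_lim[OF d0 du c1]
  note l2 = schwarz_lim[OF d0 dv c2]
  have eq: "(\<lambda>t::real. (1/t^2) *\<^sub>R (f (w + t *\<^sub>R ?v + t *\<^sub>R ?u) - f (w + t *\<^sub>R ?v) - f (w + t *\<^sub>R ?u) + f w))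
    = (\<lambda>t. (1/t^2) *\<^sub>R (f (w + t *\<^sub>R ?u + t *\<^sub>R ?v) - f (w + t *\<^sub>R ?u) - f (w + t *\<^sub>R ?v) + f w))"
    by (simp add: algebra_simps)
  have "Dd ?v (Dd ?u f) w = Dd ?u (Dd ?v f) w"
    using tendsto_unique[OF _ l1] l2 eq by (simp add: trivial_limit_at)
  then show "pd i (pd j f) w = pd j (pd i f) w" by (simp add: pd_Dd)
qed

lemma dlist_pd_commute: "smooth g \<Longrightarrow> dlist xs (pd j g) = pd j (dlist xs g)"
proof (induction xs)
  case Nil then show ?case by simp
next
  case (Cons x xs)
  then show ?case using schwarz[OF smooth_dlist[OF Cons.prems, of xs], of x j] by simp
qed

lemma dlist_perm:
  assumes "smooth f" and "mset js = mset js'"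
  shows "dlist js f = dlist js' f"
  using assms(2)
proof (induction js arbitrary: js')
  case Nil then show ?case by simp
next
  case (Cons j js)
  then have "j \<in> set js'" by (metis list.set_intros(1) set_mset_mset)
  then obtain xs ys where js': "js' = xs @ j # ys" by (meson split_list)
  have m: "mset js = mset (xs @ ys)" using Cons.prems js' by simp
  have "dlist js' f = dlist xs (pd j (dlist ys f))" using js' by (simp add: dlist_append)
  also have "\<dots> = pd j (dlist xs (dlist ys f))" by (rule dlist_pd_commute[OF smooth_dlist[OF assms(1)]])
  also have "\<dots> = pd j (dlist (xs @ ys) f)" by (simp add: dlist_append)
  also have "\<dots> = pd j (dlist js f)" using Cons.IH[OF m] by simp
  finally show ?case by simp
qed

lemma line_diff: "f differentiable at w \<Longrightarrow> (\<lambda>t. f (w + t *\<^sub>R d)) differentiable at 0"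
  using line_hasderiv[of f w 0 d] by (auto intro: differentiableI_vector)

lemma pd_add: "f differentiable at w \<Longrightarrow> g differentiable at w \<Longrightarrow>
   pd j (\<lambda>v. f v + g v) w = pd j f w + pd j g w"
  unfolding pd_def by (simp add: line_diff)

lemma pd_mult:
  fixes f g :: "(real^'d::finite) \<times> (real^'d) \<Rightarrow> complex"
  shows "f differentiable at w \<Longrightarrow> g differentiable at w \<Longrightarrow>
   pd j (\<lambda>v. f v * g v) w = f w * pd j g w + pd j f w * g w"
  unfolding pd_def by (simp add: line_diff)

lemma pd_const: "pd j (\<lambda>v. c) w = 0"
  unfolding pd_def by simp

type_synonym ('d) fn = "(real^'d) \<times> (real^'d) \<Rightarrow> complex"

fun sprod :: "('d::finite fn \<times> 'd fn) list \<Rightarrow> 'd fn" where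
  "sprod [] = (\<lambda>x. 0)"
| "sprod ((f,g)#ps) = (\<lambda>x. f x * g x + sprod ps x)"

fun dbl :: "('d::finite + 'd) \<Rightarrow> ('d fn \<times> 'd fn) list \<Rightarrow> ('d fn \<times> 'd fn) list" where
  "dbl j [] = []"
| "dbl j ((f,g)#ps) = (pd j f, g) # (f, pd j g) # dbl j ps"

fun app :: "('d::finite + 'd) list \<Rightarrow> 'd fn \<Rightarrow> 'd fn" where
  "app [] f = f"
| "app (j#js) f = app js (pd j f)"

fun Lf :: "('d::finite + 'd) list \<Rightarrow> 'd fn \<Rightarrow> 'd fn \<Rightarrow> 'd fn" where
  "Lf [] f g = (\<lambda>x. f x * g x)"
| "Lf (j#js) f g = (\<lambda>x. Lf js (pd j f) g x + Lf js f (pd j g) x)"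

fun lsum :: "('d::finite + 'd) list \<Rightarrow> ('d fn \<times> 'd fn) list \<Rightarrow> 'd fn" where
  "lsum js [] = (\<lambda>x. 0)"
| "lsum js ((f,g)#ps) = (\<lambda>x. Lf js f g x + lsum js ps x)"

definition sm :: "('d::finite fn \<times> 'd fn) list \<Rightarrow> bool" where
  "sm ps \<longleftrightarrow> (\<forall>p\<in>set ps. smooth (fst p) \<and> smooth (snd p))"

lemma app_dlist: "app js f = dlist (rev js) f"
  by (induction js arbitrary: f) (auto simp: dlist_append)

lemma sprod_diff: "sm ps \<Longrightarrow> sprod ps differentiable at x"
  by (induction ps rule: sprod.induct) (auto simp: sm_def smooth_diff0)

lemma sm_dbl: "sm ps \<Longrightarrow> sm (dbl j ps)"
  by (induction ps rule: sprod.induct) (auto simp: sm_def smooth_pd)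

lemma pd_sprod: "sm ps \<Longrightarrow> pd j (sprod ps) = sprod (dbl j ps)"
proof (induction ps rule: sprod.induct)
  case 1 then show ?case by (simp add: pd_const fun_eq_iff)
next
  case (2 f g ps)
  have sf: "smooth f" "smooth g" "sm ps" using "2.prems" by (auto simp: sm_def)
  show ?case
  proof
    fix x
    have "pd j (sprod ((f, g) # ps)) x = pd j (\<lambda>x. f x * g x) x + pd j (sprod ps) x"
      using pd_add[of "\<lambda>x. f x * g x" x "sprod ps" j] sf sprod_diff[OF sf(3)]
      by (simp add: smooth_diff0)
    also have "\<dots> = f x * pd j g x + pd j f x * g x + sprod (dbl j ps) x"
      using pd_mult[of f x g j] sf "2.IH"[OF sf(3)] by (simp add: smooth_diff0)
    finally show "pd j (sprod ((f, g) # ps)) x = sprod (dbl j ((f, g) # ps)) x"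
      by (simp add: algebra_simps)
  qed
qed

lemma lsum_dbl: "lsum js (dbl j ps) = lsum (j#js) ps"
  by (induction ps rule: sprod.induct) (auto simp: fun_eq_iff algebra_simps)

lemma app_sprod: "sm ps \<Longrightarrow> app js (sprod ps) = lsum js ps"
proof (induction js arbitrary: ps)
  case Nil
  then show ?case by (induction ps rule: sprod.induct) (auto simp: sm_def)
next
  case (Cons j js)
  then show ?case by (simp add: pd_sprod Cons.IH sm_dbl lsum_dbl)
qed

lemma Lf_diff: "smooth f \<Longrightarrow> smooth g \<Longrightarrow> Lf js f g differentiable at x"
proof (induction js arbitrary: f g)
  case Nil then show ?case by (simp add: smooth_diff0)
next
  case (Cons j js) then show ?case by (simp add: smooth_pd)
qed

lemma app_mult: "smooth f \<Longrightarrow> smooth g \<Longrightarrow> app js (\<lambda>x. f x * g x) = Lf js f g"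
proof -
  assume a: "smooth f" "smooth g"
  have "(\<lambda>x. f x * g x) = sprod [(f,g)]" by simp
  then have "app js (\<lambda>x. f x * g x) = lsum js [(f,g)]" using app_sprod[of "[(f,g)]" js] a by (simp add: sm_def)
  then show ?thesis by simp
qed

lemma smooth_mult:
  assumes a: "smooth f" "smooth g"
  shows "smooth (\<lambda>x. f x * g x)"
  unfolding smooth_def
proof
  fix js
  have "dlist js (\<lambda>x. f x * g x) = app (rev js) (\<lambda>x. f x * g x)" by (simp add: app_dlist)
  also have "\<dots> = Lf (rev js) f g" using app_mult[OF a] .
  finally show "dlist js (\<lambda>x. f x * g x) differentiable_on UNIV"
    using Lf_diff[OF a] by (simp add: differentiable_at_imp_differentiable_on)
qed

lemma dlist_const: "dlist js (\<lambda>x. c) = (if js = [] then (\<lambda>x. c) else (\<lambda>x. 0))"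
proof (induction js)
  case Nil then show ?case by simp
next
  case (Cons j js)
  have pc: "pd j (\<lambda>v. c') = (\<lambda>w. 0)" for c' :: complex by (rule ext) (rule pd_const)
  from Cons show ?case by (cases "js = []") (simp_all add: pc)
qed

lemma smooth_const: "smooth (\<lambda>x. c)"
  unfolding smooth_def dlist_const by simp

definition Bs :: "nat \<Rightarrow> (nat \<Rightarrow> real) \<Rightarrow> (nat \<Rightarrow> real) \<Rightarrow> real" where
  "Bs n F G = (\<Sum>k\<le>n. real (n choose k) * F k * G (n - k))"

lemma pascal_sum:
  fixes h :: "nat \<Rightarrow> real"
  shows "(\<Sum>m\<le>Suc n. real (Suc n choose m) * h m) =
    (\<Sum>m\<le>n. real (n choose m) * h m) + (\<Sum>m\<le>n. real (n choose m) * h (Suc m))"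
proof -
  have a: "(\<Sum>m\<le>n. real (n choose m) * h m) = h 0 + (\<Sum>m\<le>n. real (n choose Suc m) * h (Suc m))"
  proof -
    have "(\<Sum>m\<le>n. real (n choose m) * h m) = (\<Sum>m\<le>Suc n. real (n choose m) * h m)" by simp
    also have "\<dots> = h 0 + (\<Sum>m\<le>n. real (n choose Suc m) * h (Suc m))"
      by (subst sum.atMost_Suc_shift) simp
    finally show ?thesis .
  qed
  have "(\<Sum>m\<le>Suc n. real (Suc n choose m) * h m) = h 0 + (\<Sum>m\<le>n. real (Suc n choose Suc m) * h (Suc m))"
    by (subst sum.atMost_Suc_shift) simp
  also have "\<dots> = h 0 + (\<Sum>m\<le>n. real (n choose Suc m) * h (Suc m)) + (\<Sum>m\<le>n. real (n choose m) * h (Suc m))"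
    by (simp add: sum.distrib algebra_simps)
  finally show ?thesis using a by simp
qed

lemma Bs_Suc: "Bs (Suc n) F G = Bs n (\<lambda>k. F (Suc k)) G + Bs n F (\<lambda>k. G (Suc k))"
proof -
  have "Bs (Suc n) F G = (\<Sum>m\<le>n. real (n choose m) * (F m * G (Suc n - m))) +
      (\<Sum>m\<le>n. real (n choose m) * (F (Suc m) * G (Suc n - Suc m)))"
    unfolding Bs_def using pascal_sum[of n "\<lambda>k. F k * G (Suc n - k)"] by (simp add: mult.assoc)
  also have "(\<Sum>m\<le>n. real (n choose m) * (F m * G (Suc n - m))) = Bs n F (\<lambda>k. G (Suc k))"
    unfolding Bs_def by (intro sum.cong) (auto simp: Suc_diff_le)
  also have "(\<Sum>m\<le>n. real (n choose m) * (F (Suc m) * G (Suc n - Suc m))) = Bs n (\<lambda>k. F (Suc k)) G"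
    unfolding Bs_def by (intro sum.cong) auto
  finally show ?thesis by simp
qed

lemma Lf_bound:
  assumes "smooth f" "smooth g"
    and "\<And>js. norm (app js f x) \<le> F (length js)"
    and "\<And>js. norm (app js g x) \<le> G (length js)"
  shows "norm (Lf js f g x) \<le> Bs (length js) F G"
  using assms
proof (induction js arbitrary: f g F G)
  case Nil
  have "norm (f x * g x) \<le> F 0 * G 0"
    using Nil.prems(3)[of "[]"] Nil.prems(4)[of "[]"] by (simp add: norm_mult mult_mono')
  then show ?case by (simp add: Bs_def)
next
  case (Cons j js)
  have "norm (Lf js (pd j f) g x) \<le> Bs (length js) (\<lambda>k. F (Suc k)) G"
    using Cons.IH[of "pd j f" g "\<lambda>k. F (Suc k)" G] Cons.prems
    by (metis app.simps(2) length_Cons smooth_pd)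
  moreover have "norm (Lf js f (pd j g) x) \<le> Bs (length js) F (\<lambda>k. G (Suc k))"
    using Cons.IH[of f "pd j g" F "\<lambda>k. G (Suc k)"] Cons.prems
    by (metis app.simps(2) length_Cons smooth_pd)
  ultimately show ?case by (simp add: Bs_Suc norm_triangle_le add_mono)
qed

lemma jb_pos: "jb w > 0"
  unfolding jb_def by (simp add: add_pos_nonneg)

lemma smooth_pow: "smooth b \<Longrightarrow> smooth (\<lambda>v. b v ^ n)"
proof (induction n)
  case 0 then show ?case using smooth_const[of 1] by simp
next
  case (Suc n)
  then show ?case using smooth_mult[of b "\<lambda>v. b v ^ n"] by simp
qed

lemma pow_bound:
  fixes b :: "(real^'d::finite) \<times> (real^'d) \<Rightarrow> complex"
  assumes sb: "smooth b"
    and bb: "\<And>js. norm (dlist js b w) \<le> norm (b w) * jb w powr (- \<rho> * real (length js)) * G (length js)"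
    and T0: "\<And>k. T 0 k = (if k = 0 then 1 else 0)"
    and TS: "\<And>n k. T (Suc n) k = Bs k G (T n)"
  shows "norm (dlist js (\<lambda>v. b v ^ n) w) \<le> norm (b w) ^ n * jb w powr (- \<rho> * real (length js)) * T n (length js)"
proof (induction n arbitrary: js)
  case 0
  have e: "(\<lambda>v. b v ^ 0) = (\<lambda>v. 1)" by simp
  show ?case unfolding e dlist_const using jb_pos[of w] by (cases "js = []") (auto simp: T0)
next
  case (Suc n)
  have e: "(\<lambda>v. b v ^ Suc n) = (\<lambda>v. b v * b v ^ n)" by simp
  have sn: "smooth (\<lambda>v. b v ^ n)" by (rule smooth_pow[OF sb])
  define F where "F L = norm (b w) * jb w powr (- \<rho> * real L) * G L" for L
  define Gn where "Gn L = norm (b w) ^ n * jb w powr (- \<rho> * real L) * T n L" for L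
  have "dlist js (\<lambda>v. b v ^ Suc n) = app (rev js) (\<lambda>v. b v * b v ^ n)" by (simp add: e app_dlist)
  also have "\<dots> = Lf (rev js) b (\<lambda>v. b v ^ n)" by (rule app_mult[OF sb sn])
  finally have d: "dlist js (\<lambda>v. b v ^ Suc n) w = Lf (rev js) b (\<lambda>v. b v ^ n) w" by simp
  have "norm (Lf (rev js) b (\<lambda>v. b v ^ n) w) \<le> Bs (length (rev js)) F Gn"
  proof (rule Lf_bound[OF sb sn])
    fix js' :: "('d + 'd) list"
    show "norm (app js' b w) \<le> F (length js')" unfolding app_dlist F_def using bb[of "rev js'"] by simp
    show "norm (app js' (\<lambda>v. b v ^ n) w) \<le> Gn (length js')" unfolding app_dlist Gn_def using Suc.IH[of "rev js'"] by simp
  qed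
  also have "Bs (length (rev js)) F Gn = norm (b w) ^ Suc n * jb w powr (- \<rho> * real (length js)) * T (Suc n) (length js)"
  proof -
    let ?L = "length js"
    have "Bs ?L F Gn = (\<Sum>k\<le>?L. norm (b w) ^ Suc n * jb w powr (- \<rho> * real ?L) * (real (?L choose k) * G k * T n (?L - k)))"
      unfolding Bs_def
    proof (intro sum.cong refl)
      fix k assume k: "k \<in> {..?L}"
      have p: "jb w powr (- \<rho> * real k) * jb w powr (- \<rho> * real (?L - k)) = jb w powr (- \<rho> * real ?L)"
        using k by (simp add: powr_add[symmetric] of_nat_diff algebra_simps)
      show "real (?L choose k) * F k * Gn (?L - k) = norm (b w) ^ Suc n * jb w powr (- \<rho> * real ?L) * (real (?L choose k) * G k * T n (?L - k))"
        unfolding F_def Gn_def p[symmetric] by (simp add: ac_simps)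
    qed
    also have "\<dots> = norm (b w) ^ Suc n * jb w powr (- \<rho> * real ?L) * T (Suc n) ?L"
      by (simp add: TS Bs_def sum_distrib_left)
    finally show ?thesis by simp
  qed
  finally show ?case using d by simp
qed

lemma mabs_count: "mabs (count (mset js)) = length js"
proof (induction js)
  case Nil then show ?case by (simp add: mabs_def)
next
  case (Cons j js)
  have "mabs (count (mset (j # js))) = (\<Sum>i\<in>UNIV. count (mset js) i + (if i = j then 1 else 0))"
    unfolding mabs_def by (intro sum.cong) auto
  also have "\<dots> = mabs (count (mset js)) + 1" unfolding mabs_def by (simp add: sum.distrib)
  finally show ?case using Cons.IH by (metis length_Cons Suc_eq_plus1)
qed

lemma mabs_sum: "mabs (\<gamma> :: ('a::finite + 'b::finite) \<Rightarrow> nat) = mabs (\<lambda>i. \<gamma> (Inl i)) + mabs (\<lambda>i. \<gamma> (Inr i))"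
proof -
  have "mabs \<gamma> = sum \<gamma> (Inl ` UNIV \<union> Inr ` UNIV)" unfolding mabs_def by (simp only: UNIV_sum[symmetric])
  also have "\<dots> = sum \<gamma> (Inl ` UNIV) + sum \<gamma> (Inr ` UNIV)" by (rule sum.union_disjoint) auto
  also have "\<dots> = mabs (\<lambda>i. \<gamma> (Inl i)) + mabs (\<lambda>i. \<gamma> (Inr i))"
    unfolding mabs_def by (simp add: sum.reindex)
  finally show ?thesis .
qed

lemma dirs_mset: "mset (dirs (count (mset js))) = mset js"
proof -
  have "\<forall>i. count (mset (dirs (count (mset js)))) i = count (mset js) i"
    unfolding dirs_def by (rule someI[of _ js]) simp
  then show ?thesis by (simp add: multiset_eqI)
qed

lemma dirs_ex: "\<exists>js. \<gamma> = count (mset js)" for \<gamma> :: "'a::finite \<Rightarrow> nat"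
proof -
  have c: "count (Abs_multiset \<gamma>) = \<gamma>" by (rule count_Abs_multiset) simp
  obtain js where "mset js = Abs_multiset \<gamma>" using ex_mset by blast
  then show ?thesis using c by metis
qed

lemma norm_Dm: "norm (Dm \<gamma> f w) = norm (dlist (dirs \<gamma>) f w)"
  unfolding Dm_def by (simp add: norm_mult norm_inverse norm_power)

context
  fixes A :: "nat \<Rightarrow> real"
  assumes Apos: "\<And>p. A p > 0" and A0: "A 0 = 1" and A1: "A 1 = 1"
    and M4: "cond_M4 A" and M3': "cond_M3' A"
begin

definition aa :: "nat \<Rightarrow> real" where "aa p = A p / fact p"

lemma aa_pos: "aa p > 0" using Apos[of p] by (simp add: aa_def)
lemma aa0: "aa 0 = 1" using A0 by (simp add: aa_def)
lemma aa1: "aa 1 = 1" using A1 by (simp add: aa_def)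
lemma aa1': "aa (Suc 0) = 1" using aa1 by simp
lemma A_aa: "A p = fact p * aa p" by (simp add: aa_def)

definition rr :: "nat \<Rightarrow> real" where "rr i = aa (Suc i) / aa i"

lemma rr_step: "rr i \<le> rr (Suc i)"
proof -
  have "(A (Suc i) / fact (Suc i))^2 \<le> (A i / fact i) * (A (Suc (Suc i)) / fact (Suc (Suc i)))"
    using M4 unfolding cond_M4_def by (metis Suc_eq_plus1 diff_Suc_1 le_add2)
  then have "aa (Suc i)^2 \<le> aa i * aa (Suc (Suc i))" by (simp add: aa_def)
  then show ?thesis using aa_pos[of i] aa_pos[of "Suc i"]
    by (simp add: rr_def divide_simps power2_eq_square mult.commute)
qed

lemma rr_mono: "i \<le> j \<Longrightarrow> rr i \<le> rr j"
  using lift_Suc_mono_le[of rr, OF rr_step] by blast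

lemma aa_Suc: "aa (Suc i) = rr i * aa i"
  using aa_pos[of i] by (simp add: rr_def)

lemma rr_pos: "rr i > 0" using aa_pos by (simp add: rr_def)

lemma Lstar: "p \<le> q \<Longrightarrow> aa (p + d) * aa q \<le> aa (q + d) * aa p"
proof (induction d)
  case 0 then show ?case by simp
next
  case (Suc d)
  have "aa (p + Suc d) * aa q = rr (p + d) * (aa (p + d) * aa q)" by (simp add: aa_Suc)
  also have "\<dots> \<le> rr (p + d) * (aa (q + d) * aa p)"
    using Suc rr_pos by (intro mult_left_mono) (auto intro: less_imp_le)
  also have "\<dots> \<le> rr (q + d) * (aa (q + d) * aa p)"
    using Suc.prems rr_mono[of "p + d" "q + d"] aa_pos by (intro mult_right_mono) (auto intro: less_imp_le)
  also have "\<dots> = aa (q + Suc d) * aa p" by (simp add: aa_Suc)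
  finally show ?case .
qed

lemma aa_super: "aa p * aa q \<le> aa (p + q)"
  using Lstar[of 0 q p] by (simp add: aa0 add.commute)

lemma aa_key:
  assumes "1 \<le> j" "m + j \<le> k"
  shows "aa j * aa (k - j) * aa (m + 1) \<le> aa k * aa m"
proof -
  have 1: "aa j * aa (m + 1) \<le> aa (m + j)"
    using Lstar[of 1 "m+1" "j - 1"] assms by (simp add: aa1')
  have 2: "aa (m + j) * aa (k - j) \<le> aa k * aa m"
    using Lstar[of m "k - j" j] assms by simp
  have "aa j * aa (k - j) * aa (m + 1) = (aa j * aa (m + 1)) * aa (k - j)" by (simp add: ac_simps)
  also have "\<dots> \<le> aa (m + j) * aa (k - j)" using 1 aa_pos by (intro mult_right_mono) (auto intro: less_imp_le)
  finally show ?thesis using 2 by simp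
qed

lemma fact_mult_le: "fact p * fact q \<le> (fact (p + q) :: real)"
proof -
  have "fact p * fact (p + q - p) * (p + q choose p) = (fact (p + q) :: nat)"
    by (rule binomial_fact_lemma) simp
  then have "fact p * fact q * (p + q choose p) = (fact (p + q) :: nat)" by simp
  moreover have "(p + q choose p) \<ge> 1" by (simp add: Suc_leI)
  ultimately have "fact p * fact q \<le> (fact (p + q) :: nat)"
    by (metis mult.right_neutral mult_le_mono2)
  then have "real (fact p * fact q) \<le> real (fact (p + q))" by (simp only: of_nat_le_iff)
  then show ?thesis by simp
qed

lemma A_super: "A p * A q \<le> A (p + q)"
proof -
  have "A p * A q = (fact p * fact q) * (aa p * aa q)" by (simp add: A_aa)
  also have "\<dots> \<le> fact (p + q) * aa (p + q)"
    using aa_super[of p q] aa_pos fact_mult_le[of p q]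
    by (intro mult_mono) (auto intro: less_imp_le mult_nonneg_nonneg)
  finally show ?thesis by (simp add: A_aa)
qed

lemma rr_unbounded: "\<exists>N. rr N > R"
proof (rule ccontr)
  assume "\<not> ?thesis"
  then have b: "\<And>k. rr k \<le> R" by (simp add: not_less)
  have Rpos: "R > 0" using b[of 0] rr_pos[of 0] by simp
  have eq: "A k / A (k + 1) = 1 / (rr k * real (Suc k))" for k
  proof -
    have "A k / A (k + 1) = (fact k * aa k) / (fact (Suc k) * (rr k * aa k))"
      by (simp add: A_aa aa_Suc)
    also have "\<dots> = (fact k * aa k) / ((fact k * aa k) * (rr k * real (Suc k)))"
      by (simp only: fact_Suc of_nat_mult mult_ac)
    also have "\<dots> = 1 / (rr k * real (Suc k))"
      using aa_pos[of k] rr_pos[of k] by (simp del: of_nat_Suc)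
    finally show ?thesis .
  qed
  have "summable (\<lambda>k. A k / A (k + 1))" using M3' by (simp add: cond_M3'_def)
  then have s: "summable (\<lambda>k. R * (A k / A (k + 1)))" by (rule summable_mult)
  have "summable (\<lambda>k. inverse (real (Suc k)))"
  proof (rule summable_comparison_test'[OF s])
    fix k :: nat
    have "inverse (real (Suc k)) = (R / R) * (1 / real (Suc k))" using Rpos by (simp add: inverse_eq_divide)
    also have "\<dots> = 1 * (1 / real (Suc k))" using Rpos by simp
    also have "\<dots> \<le> (R / rr k) * (1 / real (Suc k))"
      using b[of k] rr_pos[of k] by (intro mult_right_mono) auto
    also have "\<dots> = R * (1 / (rr k * real (Suc k)))" by simp
    also have "\<dots> = R * (A k / A (k + 1))" by (simp only: eq)
    finally show "norm (inverse (real (Suc k))) \<le> R * (A k / A (k + 1))" by simp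
  qed
  then have "summable (\<lambda>k. inverse (real k) :: real)"
    using summable_Suc_iff[where f="\<lambda>n. inverse (real n) :: real"] by simp
  then show False using not_summable_harmonic by blast
qed

lemma aa_growth:
  assumes "C \<ge> 1"
  shows "\<exists>K>0. \<forall>m. C ^ m \<le> K * aa m"
proof -
  obtain N where N: "rr N > C" using rr_unbounded by blast
  have rN: "k \<ge> N \<Longrightarrow> rr k \<ge> C" for k using rr_mono[of N k] N by simp
  have low: "aa (N + i) \<ge> aa N * C ^ i" for i
  proof (induction i)
    case 0 then show ?case by simp
  next
    case (Suc i)
    have "aa N * C ^ Suc i = C * (aa N * C ^ i)" by simp
    also have "\<dots> \<le> rr (N + i) * aa (N + i)"
      using Suc rN[of "N + i"] assms aa_pos[of N]
      by (intro mult_mono) (auto intro: mult_nonneg_nonneg)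
    also have "\<dots> = aa (N + Suc i)" by (simp add: aa_Suc)
    finally show ?case .
  qed
  define K where "K = C ^ N / aa N + (\<Sum>i<N. C ^ i / aa i)"
  have k1: "C ^ N / aa N > 0" using aa_pos[of N] assms by simp
  have k2: "(\<Sum>i<N. C ^ i / aa i) \<ge> 0" using aa_pos assms by (intro sum_nonneg) (auto intro: divide_nonneg_pos)
  have Kpos: "K > 0" unfolding K_def using k1 k2 by linarith
  have "C ^ m \<le> K * aa m" for m
  proof (cases "m \<ge> N")
    case True
    then obtain i where m: "m = N + i" by (metis le_add_diff_inverse)
    have "C ^ m = C ^ N * C ^ i" by (simp add: m power_add)
    also have "\<dots> \<le> C ^ N * (aa m / aa N)"
      using low[of i] aa_pos[of N] assms by (intro mult_left_mono) (auto simp: m field_simps)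
    also have "\<dots> = (C ^ N / aa N) * aa m" by simp
    also have "\<dots> \<le> K * aa m"
      using aa_pos[of m] k2 unfolding K_def by (intro mult_right_mono) auto
    finally show ?thesis .
  next
    case False
    then have mN: "m \<in> {..<N}" by simp
    have "C ^ m / aa m \<le> (\<Sum>i<N. C ^ i / aa i)"
      using assms aa_pos by (intro member_le_sum[OF mN]) (auto intro: divide_nonneg_pos)
    also have "\<dots> \<le> K" unfolding K_def using aa_pos[of N] assms by simp
    finally show ?thesis using aa_pos[of m] by (simp add: field_simps)
  qed
  with Kpos show ?thesis by blast
qed

lemma geo2: "(\<Sum>i<k. (2::real) ^ (k - Suc i)) = 2 ^ k - 1"
proof -
  have "(\<Sum>i<k. (2::real) ^ (k - Suc i)) = (\<Sum>i<k. (2::real) ^ i)"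
    by (rule sum.nat_diff_reindex)
  also have "\<dots> = 2 ^ k - 1" by (induction k) auto
  finally show ?thesis .
qed

context
  fixes h Cc :: real
  assumes hpos: "h > 0" and Cc1: "Cc \<ge> 1"
begin

definition GG :: "nat \<Rightarrow> real" where
  "GG j = (if j = 0 then 1 else Cc * h ^ j * A j)"

fun TT :: "nat \<Rightarrow> nat \<Rightarrow> real" where
  "TT 0 k = (if k = 0 then 1 else 0)"
| "TT (Suc n) k = Bs k GG (TT n)"

definition Rr :: "nat \<Rightarrow> nat \<Rightarrow> real" where
  "Rr n k = (\<Sum>m\<le>n. real (n choose m) * (Cc ^ m * (if m \<le> k then 1 else 0) / aa m))"

lemma TT_bound: "TT n k \<le> 2 ^ k * h ^ k * A k * Rr n k"
proof (induction n arbitrary: k)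
  case 0
  have "Rr 0 k = 1" by (simp add: Rr_def aa0)
  then show ?case using Apos[of k] hpos A0 by auto
next
  case (Suc n)
  define R' where "R' = (\<Sum>m\<le>n. real (n choose m) * (Cc ^ Suc m * (if Suc m \<le> k then 1 else 0) / aa (Suc m)))"
  have R'nn: "R' \<ge> 0" unfolding R'_def using Cc1 aa_pos
    by (intro sum_nonneg mult_nonneg_nonneg) (auto intro: divide_nonneg_pos)
  have Rs: "Rr (Suc n) k = Rr n k + R'"
    unfolding Rr_def R'_def
    by (rule pascal_sum[where h="\<lambda>m. Cc ^ m * (if m \<le> k then 1 else 0) / aa m"])
  have hk: "h ^ k * A k \<ge> 0" using hpos Apos[of k] by simp
  have TS: "TT (Suc n) k = TT n k + (\<Sum>i<k. real (k choose Suc i) * GG (Suc i) * TT n (k - Suc i))"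
    by (simp add: Bs_def sum.atMost_shift GG_def)
  have trm: "real (k choose Suc i) * GG (Suc i) * TT n (k - Suc i) \<le> 2 ^ (k - Suc i) * (h ^ k * A k * R')"
    if i: "i < k" for i
  proof -
    define j where "j = Suc i"
    have j: "1 \<le> j" "j \<le> k" using i by (auto simp: j_def)
    have Gj: "GG j = Cc * h ^ j * A j" using j by (simp add: GG_def)
    have Gnn: "real (k choose j) * GG j \<ge> 0" using Gj Cc1 hpos Apos[of j] by simp
    have "real (k choose j) * GG j * TT n (k - j)
       \<le> real (k choose j) * GG j * (2 ^ (k - j) * h ^ (k - j) * A (k - j) * Rr n (k - j))"
      using Suc.IH[of "k - j"] Gnn by (intro mult_left_mono) auto
    also have "\<dots> = 2 ^ (k - j) * (h ^ j * h ^ (k - j)) * (real (k choose j) * A j * A (k - j)) * (Cc * Rr n (k - j))"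
      by (simp add: Gj ac_simps)
    also have "h ^ j * h ^ (k - j) = h ^ k" using j by (simp add: power_add[symmetric])
    also have "real (k choose j) * A j * A (k - j) = fact k * (aa j * aa (k - j))"
      using j by (simp add: binomial_fact A_aa field_simps)
    also have "Cc * Rr n (k - j) * (aa j * aa (k - j)) \<le> aa k * R'"
    proof -
      have "Cc * Rr n (k - j) * (aa j * aa (k - j)) =
        (\<Sum>m\<le>n. real (n choose m) * (Cc ^ Suc m * (if m \<le> k - j then 1 else 0) * (aa j * aa (k - j)) / aa m))"
        unfolding Rr_def by (simp add: sum_distrib_left sum_distrib_right ac_simps)
      also have "\<dots> \<le> (\<Sum>m\<le>n. real (n choose m) * (aa k * (Cc ^ Suc m * (if Suc m \<le> k then 1 else 0) / aa (Suc m))))"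
      proof (intro sum_mono mult_left_mono)
        fix m
        show "Cc ^ Suc m * (if m \<le> k - j then 1 else 0) * (aa j * aa (k - j)) / aa m
            \<le> aa k * (Cc ^ Suc m * (if Suc m \<le> k then 1 else 0) / aa (Suc m))"
        proof (cases "m \<le> k - j")
          case True
          have key: "aa j * aa (k - j) * aa (m + 1) \<le> aa k * aa m" using aa_key[of j m k] j True by simp
          have "(aa j * aa (k - j)) / aa m \<le> aa k / aa (Suc m)"
            using key aa_pos[of m] aa_pos[of "Suc m"] by (simp add: field_simps)
          then have "Cc ^ Suc m * ((aa j * aa (k - j)) / aa m) \<le> Cc ^ Suc m * (aa k / aa (Suc m))"
            using Cc1 by (intro mult_left_mono) auto
          have sm: "Suc m \<le> k" using True j by linarith
          have e1: "Cc ^ Suc m * (if m \<le> k - j then 1 else 0) * (aa j * aa (k - j)) / aa m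
             = Cc ^ Suc m * ((aa j * aa (k - j)) / aa m)" using True by simp
          have e2: "aa k * (Cc ^ Suc m * (if Suc m \<le> k then 1 else 0) / aa (Suc m))
             = Cc ^ Suc m * (aa k / aa (Suc m))" using sm by simp
          show ?thesis unfolding e1 e2 by fact
        next
          case False
          then show ?thesis using Cc1 aa_pos[of k] aa_pos[of "Suc m"] by simp
        qed
      qed simp
      also have "\<dots> = aa k * R'" unfolding R'_def by (simp add: sum_distrib_left ac_simps)
      finally show ?thesis .
    qed
    have "2 ^ (k - j) * h ^ k * (fact k * (aa j * aa (k - j))) * (Cc * Rr n (k - j))
        = 2 ^ (k - j) * h ^ k * fact k * (Cc * Rr n (k - j) * (aa j * aa (k - j)))" by (simp add: ac_simps)
    also have "\<dots> \<le> 2 ^ (k - j) * h ^ k * fact k * (aa k * R')"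
      using \<open>Cc * Rr n (k - j) * (aa j * aa (k - j)) \<le> aa k * R'\<close> hpos by (intro mult_left_mono) auto
    also have "\<dots> = 2 ^ (k - j) * (h ^ k * A k * R')" by (simp add: A_aa ac_simps)
    finally show ?thesis unfolding j_def by (simp add: ac_simps)
  qed
  have "(\<Sum>i<k. real (k choose Suc i) * GG (Suc i) * TT n (k - Suc i)) \<le> (\<Sum>i<k. 2 ^ (k - Suc i) * (h ^ k * A k * R'))"
    by (intro sum_mono trm) simp
  also have "\<dots> = (2 ^ k - 1) * (h ^ k * A k * R')" by (simp add: sum_distrib_right[symmetric] geo2)
  also have "\<dots> \<le> 2 ^ k * (h ^ k * A k * R')" using hk R'nn by (intro mult_right_mono) auto
  finally have S: "(\<Sum>i<k. real (k choose Suc i) * GG (Suc i) * TT n (k - Suc i)) \<le> 2 ^ k * (h ^ k * A k * R')" .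
  have "TT (Suc n) k \<le> 2 ^ k * h ^ k * A k * Rr n k + 2 ^ k * (h ^ k * A k * R')"
    using TS Suc.IH[of k] S by linarith
  also have "\<dots> = 2 ^ k * h ^ k * A k * Rr (Suc n) k" by (simp add: Rs algebra_simps)
  finally show ?case .
qed

lemma Rr_bound:
  assumes K: "\<And>m. Cc ^ m \<le> K * aa m"
  shows "Rr n k \<le> K * 2 ^ n"
proof -
  have "Rr n k \<le> (\<Sum>m\<le>n. real (n choose m) * K)"
    unfolding Rr_def
  proof (intro sum_mono mult_left_mono)
    fix m
    show "Cc ^ m * (if m \<le> k then 1 else 0) / aa m \<le> K"
      using K[of m] aa_pos[of m] one_le_power[OF Cc1, of m] by (auto simp: field_simps)
  qed simp
  also have "\<dots> = (\<Sum>m\<le>n. real (n choose m)) * K" by (simp add: sum_distrib_right)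
  also have "(\<Sum>m\<le>n. real (n choose m)) = 2 ^ n"
  proof -
    have "real (\<Sum>m\<le>n. n choose m) = 2 ^ n" using choose_row_sum[of n] by simp
    then show ?thesis by simp
  qed
  finally show ?thesis by (simp add: mult.commute)
qed

lemma core:
  fixes b :: "(real^'d::finite) \<times> (real^'d) \<Rightarrow> complex" and \<rho> B C K :: real
  assumes sb: "smooth b"
    and est: "\<forall>(\<alpha>::'d \<Rightarrow> nat) (\<beta>::'d \<Rightarrow> nat) w. w \<notin> Qset B \<longrightarrow>
                 norm (Dm (case_sum \<beta> \<alpha>) b w) \<le>
                   C * h ^ (mabs \<alpha> + mabs \<beta>) * norm (b w) * A (mabs \<alpha>) * A (mabs \<beta>)
                     * jb w powr (- \<rho> * real (mabs \<alpha> + mabs \<beta>))"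
    and CC: "C \<le> Cc"
    and K: "\<And>m. Cc ^ m \<le> K * aa m"
    and w: "w \<notin> Qset B"
  shows "norm (Dm \<gamma> (\<lambda>v. b v ^ n) w) \<le> K * 2 ^ n * (2 * h) ^ mabs \<gamma> * A (mabs \<gamma>) * jb w powr (- \<rho> * real (mabs \<gamma>)) * norm (b w) ^ n"
proof -
  have bb: "norm (dlist js b w) \<le> norm (b w) * jb w powr (- \<rho> * real (length js)) * GG (length js)" for js
  proof (cases "js = []")
    case True then show ?thesis using jb_pos[of w] by (simp add: GG_def)
  next
    case False
    define \<gamma>' where "\<gamma>' = count (mset js)"
    have L: "mabs \<gamma>' = length js" unfolding \<gamma>'_def by (rule mabs_count)
    have dl: "dlist js b = dlist (dirs \<gamma>') b" unfolding \<gamma>'_def by (rule dlist_perm[OF sb]) (simp add: dirs_mset)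
    define \<alpha> where "\<alpha> = (\<lambda>i. \<gamma>' (Inr i))"
    define \<beta> where "\<beta> = (\<lambda>i. \<gamma>' (Inl i))"
    have cs: "case_sum \<beta> \<alpha> = \<gamma>'" unfolding \<alpha>_def \<beta>_def by (rule ext) (simp split: sum.split)
    have Lab: "mabs \<alpha> + mabs \<beta> = length js" using mabs_sum[of \<gamma>'] L unfolding \<alpha>_def \<beta>_def by simp
    let ?X = "h ^ length js * norm (b w) * jb w powr (- \<rho> * real (length js))"
    have X: "?X \<ge> 0" using hpos by simp
    have "norm (dlist js b w) = norm (Dm (case_sum \<beta> \<alpha>) b w)" by (simp add: cs norm_Dm dl)
    also have "\<dots> \<le> C * h ^ (mabs \<alpha> + mabs \<beta>) * norm (b w) * A (mabs \<alpha>) * A (mabs \<beta>) * jb w powr (- \<rho> * real (mabs \<alpha> + mabs \<beta>))"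
      using est w by blast
    also have "\<dots> = (C * ?X) * (A (mabs \<alpha>) * A (mabs \<beta>))"
      by (simp add: Lab ac_simps)
    also have "\<dots> \<le> (Cc * ?X) * A (length js)"
    proof (rule mult_mono)
      show "C * ?X \<le> Cc * ?X" using CC X by (rule mult_right_mono)
      show "A (mabs \<alpha>) * A (mabs \<beta>) \<le> A (length js)" using A_super[of "mabs \<alpha>" "mabs \<beta>"] Lab by simp
      show "0 \<le> Cc * ?X" using Cc1 X by simp
      show "0 \<le> A (mabs \<alpha>) * A (mabs \<beta>)" using Apos by (simp add: less_imp_le)
    qed
    also have "\<dots> = norm (b w) * jb w powr (- \<rho> * real (length js)) * GG (length js)"
      using False by (simp add: GG_def ac_simps)
    finally show ?thesis .
  qed
  obtain js where js: "\<gamma> = count (mset js)" using dirs_ex by blast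
  have Lg: "length (dirs \<gamma>) = mabs \<gamma>"
    by (metis dirs_mset js mabs_count size_mset)
  let ?L = "mabs \<gamma>"
  have "norm (Dm \<gamma> (\<lambda>v. b v ^ n) w) = norm (dlist (dirs \<gamma>) (\<lambda>v. b v ^ n) w)" by (rule norm_Dm)
  also have "\<dots> \<le> norm (b w) ^ n * jb w powr (- \<rho> * real ?L) * TT n ?L"
    using pow_bound[OF sb bb TT.simps(1) TT.simps(2), of "dirs \<gamma>" n] Lg by simp
  also have "\<dots> \<le> norm (b w) ^ n * jb w powr (- \<rho> * real ?L) * (2 ^ ?L * h ^ ?L * A ?L * (K * 2 ^ n))"
  proof (rule mult_left_mono)
    have "TT n ?L \<le> 2 ^ ?L * h ^ ?L * A ?L * Rr n ?L" by (rule TT_bound)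
    also have "\<dots> \<le> 2 ^ ?L * h ^ ?L * A ?L * (K * 2 ^ n)"
      using Rr_bound[OF K, of n ?L] hpos Apos[of ?L] by (intro mult_left_mono) auto
    finally show "TT n ?L \<le> 2 ^ ?L * h ^ ?L * A ?L * (K * 2 ^ n)" .
  qed simp
  also have "\<dots> = K * 2 ^ n * (2 * h) ^ ?L * A ?L * jb w powr (- \<rho> * real ?L) * norm (b w) ^ n"
    by (simp add: power_mult_distrib ac_simps)
  finally show ?thesis .
qed

end

end

theorem corollary7p7:
  fixes u :: ultra and M A :: "nat \<Rightarrow> real" and \<rho> B :: real
    and b :: "(real^'d::finite) \<times> (real^'d) \<Rightarrow> complex"
  assumes "standing M A \<rho>"
    and "Gamma_space u M A \<rho> b"
    and "hypoelliptic u M A \<rho> B b"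
  shows "(let est = (\<lambda>h C. \<forall>(\<gamma>::('d + 'd) \<Rightarrow> nat) (n::nat) w. w \<notin> Qset B \<longrightarrow>
              norm (Dm \<gamma> (\<lambda>v. b v ^ n) w) \<le>
                C * 2 ^ n * h ^ mabs \<gamma> * A (mabs \<gamma>) * jb w powr (- \<rho> * real (mabs \<gamma>))
                  * norm (b w) ^ n)
         in case u of
              Beurling \<Rightarrow> (\<forall>h>0. \<exists>C>0. est h C)
            | Roumieu \<Rightarrow> (\<exists>h>0. \<exists>C>0. est h C))"
proof -
  have Apos: "\<And>p. A p > 0" and A0: "A 0 = 1" and A1: "A 1 = 1" and M4: "cond_M4 A" and M3': "cond_M3' A"
    using assms(1) unfolding standing_def by auto
  have sb: "smooth b" using assms(2) unfolding Gamma_space_def by auto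
  have h2: "hypo_ii u A \<rho> B b" using assms(3) unfolding hypoelliptic_def by auto
  have main: "\<exists>K>0. \<forall>(\<gamma>::('d + 'd) \<Rightarrow> nat) (n::nat) w. w \<notin> Qset B \<longrightarrow>
              norm (Dm \<gamma> (\<lambda>v. b v ^ n) w) \<le>
                K * 2 ^ n * (2 * h) ^ mabs \<gamma> * A (mabs \<gamma>) * jb w powr (- \<rho> * real (mabs \<gamma>))
                  * norm (b w) ^ n"
    if h: "h > 0" and est: "\<forall>(\<alpha>::'d \<Rightarrow> nat) (\<beta>::'d \<Rightarrow> nat) w. w \<notin> Qset B \<longrightarrow>
                 norm (Dm (case_sum \<beta> \<alpha>) b w) \<le>
                   C * h ^ (mabs \<alpha> + mabs \<beta>) * norm (b w) * A (mabs \<alpha>) * A (mabs \<beta>)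
                     * jb w powr (- \<rho> * real (mabs \<alpha> + mabs \<beta>))" for h C
  proof -
    define Cc where "Cc = max C 1"
    have Cc1: "Cc \<ge> 1" and CC: "C \<le> Cc" unfolding Cc_def by auto
    obtain K where K: "K > 0" "\<And>m. Cc ^ m \<le> K * aa A m"
      using aa_growth[OF Apos A0 A1 M4 M3' Cc1] by blast
    show ?thesis
      using core[OF Apos A0 A1 M4 M3' h Cc1 sb est CC K(2)] K(1) by blast
  qed
  show ?thesis
  proof (cases u)
    case Beurling
    have "\<exists>C>0. \<forall>(\<gamma>::('d + 'd) \<Rightarrow> nat) (n::nat) w. w \<notin> Qset B \<longrightarrow>
              norm (Dm \<gamma> (\<lambda>v. b v ^ n) w) \<le>
                C * 2 ^ n * H ^ mabs \<gamma> * A (mabs \<gamma>) * jb w powr (- \<rho> * real (mabs \<gamma>))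
                  * norm (b w) ^ n" if H: "H > 0" for H
    proof -
      have H2: "H / 2 > 0" using H by simp
      have hb: "\<forall>h>0. \<exists>C. \<forall>(\<alpha>::'d \<Rightarrow> nat) (\<beta>::'d \<Rightarrow> nat) w. w \<notin> Qset B \<longrightarrow>
                 norm (Dm (case_sum \<beta> \<alpha>) b w) \<le>
                   C * h ^ (mabs \<alpha> + mabs \<beta>) * norm (b w) * A (mabs \<alpha>) * A (mabs \<beta>)
                     * jb w powr (- \<rho> * real (mabs \<alpha> + mabs \<beta>))"
        using h2 Beurling unfolding hypo_ii_def Let_def by simp
      obtain C where "\<forall>(\<alpha>::'d \<Rightarrow> nat) (\<beta>::'d \<Rightarrow> nat) w. w \<notin> Qset B \<longrightarrow>
                 norm (Dm (case_sum \<beta> \<alpha>) b w) \<le>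
                   C * (H/2) ^ (mabs \<alpha> + mabs \<beta>) * norm (b w) * A (mabs \<alpha>) * A (mabs \<beta>)
                     * jb w powr (- \<rho> * real (mabs \<alpha> + mabs \<beta>))"
        using hb H2 by blast
      from main[OF H2 this] show ?thesis by simp
    qed
    then show ?thesis using Beurling by (simp add: Let_def)
  next
    case Roumieu
    obtain h C where h: "h > 0" and hest: "\<forall>(\<alpha>::'d \<Rightarrow> nat) (\<beta>::'d \<Rightarrow> nat) w. w \<notin> Qset B \<longrightarrow>
                 norm (Dm (case_sum \<beta> \<alpha>) b w) \<le>
                   C * h ^ (mabs \<alpha> + mabs \<beta>) * norm (b w) * A (mabs \<alpha>) * A (mabs \<beta>)
                     * jb w powr (- \<rho> * real (mabs \<alpha> + mabs \<beta>))"
      using h2 Roumieu unfolding hypo_ii_def Let_def by auto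
    from main[OF h hest] have "\<exists>C>0. \<forall>(\<gamma>::('d + 'd) \<Rightarrow> nat) (n::nat) w. w \<notin> Qset B \<longrightarrow>
              norm (Dm \<gamma> (\<lambda>v. b v ^ n) w) \<le>
                C * 2 ^ n * (2 * h) ^ mabs \<gamma> * A (mabs \<gamma>) * jb w powr (- \<rho> * real (mabs \<gamma>))
                  * norm (b w) ^ n" .
    moreover have "2 * h > 0" using h by simp
    ultimately have ex: "\<exists>h'>0. \<exists>C>0. \<forall>(\<gamma>::('d + 'd) \<Rightarrow> nat) (n::nat) w. w \<notin> Qset B \<longrightarrow>
              norm (Dm \<gamma> (\<lambda>v. b v ^ n) w) \<le>
                C * 2 ^ n * h' ^ mabs \<gamma> * A (mabs \<gamma>) * jb w powr (- \<rho> * real (mabs \<gamma>))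
                  * norm (b w) ^ n" by blast
    show ?thesis unfolding Let_def Roumieu ultra.case by (rule ex)
  qed
qed

end
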